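(* Let $(P,h)$ be a poset endowed with a height function $h$, and let $H$ be the maximal value of $h$. The generating series $\mathscr{Z}_{P,h} = \sum_{n \geq 0} \mathsf{Z}_{P,h}([n+1]_q)\, t^n$ can be expressed as a rational fraction: \begin{equation} \mathscr{Z}_{P,h} = \frac{\mathcal{H}_{P,h}(q,t)}{(1- t)(1-q t)\dots(1-q^{H} t)}, \end{equation} where $\mathcal{H}_{P,h}$ is a polynomial in $q, q^{-1}$ and $t$ with integer coefficients. The degree of $\mathcal{H}_{P,h}$ with respect to $t$ is at most $H$.
   Context: $P$ is a finite poset and $h : P \to \mathbb{N}$ is a height function, i.e. $h(x) < h(y)$ for every cover relation $x < y$ in $P$. We write $[n]_q = (q^n-1)/(q-1)$. The $q$-Zeta polynomial $\mathsf{Z}_{P,h}(x) \in \mathbb{Q}(q)[x]$ is the unique polynomial such that for every integer $n \geq 2$, $\mathsf{Z}_{P,h}([n]_q) = \sum_{e_1 \leq \dots \leq e_{n-1}} q^{\sum_j h(e_j)}$, the sum running over all (weak) multichains $e_1 \leq \dots \leq e_{n-1}$ of elements of $P$; its degree is $H$, and its value at $[1]_q=1$ is the Euler characteristic of the order complex of $P$. The polynomial $\mathcal{H}_{P,h}$ is defined as the numerator appearing in this statement. *)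

theory Defs
  imports "HOL-Computational_Algebra.Computational_Algebra"
begin

definition qq :: "rat poly fract" where
  "qq = Fract [:0, 1:] 1"

definition qint :: "nat \<Rightarrow> rat poly fract" where
  "qint n = (qq ^ n - 1) / (qq - 1)"

definition is_height :: "'a::order set \<Rightarrow> ('a \<Rightarrow> nat) \<Rightarrow> bool" where
  "is_height P h \<longleftrightarrow>
     (\<forall>x\<in>P. \<forall>y\<in>P. x < y \<and> \<not> (\<exists>z\<in>P. x < z \<and> z < y) \<longrightarrow> h x < h y)"

definition multichains :: "'a::order set \<Rightarrow> nat \<Rightarrow> 'a list set" where
  "multichains P m = {xs. length xs = m \<and> set xs \<subseteq> P \<and> sorted_wrt (\<le>) xs}"

definition qZeta :: "'a::order set \<Rightarrow> ('a \<Rightarrow> nat) \<Rightarrow> rat poly fract poly" where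
  "qZeta P h = (THE p. \<forall>n\<ge>2. poly p (qint n) =
       (\<Sum>xs\<in>multichains P (n - 1). qq ^ sum_list (map h xs)))"

definition qZeta_series :: "'a::order set \<Rightarrow> ('a \<Rightarrow> nat) \<Rightarrow> rat poly fract fps" where
  "qZeta_series P h = Abs_fps (\<lambda>n. poly (qZeta P h) (qint (n + 1)))"

text \<open>Polynomial in q, q^{-1}, t with integer coefficients, given by its
  coefficient function c k j = coefficient of t^k q^j, viewed as a power series in t.\<close>
definition laurent_series :: "(nat \<Rightarrow> int \<Rightarrow> int) \<Rightarrow> rat poly fract fps" where
  "laurent_series c = Abs_fps (\<lambda>k. \<Sum>j\<in>{j. c k j \<noteq> 0}. of_int (c k j) * qq powi j)"

end

theory Submission
  imports Defs
begin


lemma qq_power: "qq ^ n = Fract (monom 1 n) 1"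
proof (induction n)
  case 0 thus ?case by (simp add: One_fract_def)
next
  case (Suc n)
  have "qq ^ Suc n = Fract [:0,1:] 1 * Fract (monom 1 n) 1" by (simp only: power_Suc Suc) (simp add: qq_def)
  also have "\<dots> = Fract (monom 1 (Suc n)) 1" by (simp add: mult_fract monom_Suc)
  finally show ?case .
qed

lemma qq_power_inj: "qq ^ a = qq ^ b \<Longrightarrow> a = b"
  by (simp add: qq_power eq_fract) (metis degree_monom_eq one_neq_zero)

lemma qq_nz [simp]: "qq \<noteq> 0"
  using qq_power[of 1] by (simp add: qq_def eq_fract Zero_fract_def)

lemma qq_ne1 [simp]: "qq \<noteq> 1"
  by (metis qq_power_inj power_0 power_one_right zero_neq_one)

lemma qint_inj: "qint a = qint b \<Longrightarrow> a = b"
proof -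
  assume "qint a = qint b"
  hence "qq ^ a - 1 = qq ^ b - 1" using qq_ne1 by (simp add: qint_def divide_cancel_right)
  thus ?thesis using qq_power_inj by simp
qed

lemma qint_1 [simp]: "qint 1 = 1"
  using qq_ne1 by (simp add: qint_def)

lemma qint_Suc_alt: "qint (Suc m) = - 1 / (qq - 1) + (qq / (qq - 1)) * qq ^ m"
  by (simp add: qint_def diff_divide_distrib)



definition deg_le :: "'b::comm_ring_1 fps \<Rightarrow> nat \<Rightarrow> bool" where
  "deg_le f d \<longleftrightarrow> (\<forall>n>d. f $ n = 0)"

lemma deg_le_mult:
  assumes "deg_le f a" "deg_le g b" shows "deg_le (f * g) (a + b)"
  unfolding deg_le_def
proof (intro allI impI)
  fix n assume n: "n > a + b"
  have "(f * g) $ n = (\<Sum>i=0..n. f$i * g$(n - i))" by (rule fps_mult_nth)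
  also have "\<dots> = 0"
  proof (rule sum.neutral, intro ballI)
    fix i assume "i \<in> {0..n}"
    show "f$i * g$(n - i) = 0"
    proof (cases "i > a")
      case True thus ?thesis using assms(1) by (simp add: deg_le_def)
    next
      case False hence "n - i > b" using n by linarith
      thus ?thesis using assms(2) by (simp add: deg_le_def)
    qed
  qed
  finally show "(f * g) $ n = 0" .
qed

lemma deg_le_mono: "deg_le f a \<Longrightarrow> a \<le> b \<Longrightarrow> deg_le f b"
  by (simp add: deg_le_def)

lemma deg_le_add: "deg_le f a \<Longrightarrow> deg_le g a \<Longrightarrow> deg_le (f + g) a"
  by (simp add: deg_le_def)

lemma deg_le_diff: "deg_le f a \<Longrightarrow> deg_le g a \<Longrightarrow> deg_le (f - g) a"
  by (simp add: deg_le_def)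

lemma deg_le_sum: "(\<And>x. x \<in> S \<Longrightarrow> deg_le (f x) a) \<Longrightarrow> deg_le (sum f S) a"
  by (simp add: deg_le_def fps_sum_nth)

lemma deg_le_const: "deg_le (fps_const c) 0"
  by (simp add: deg_le_def)

lemma deg_le_1: "deg_le 1 0"
  by (simp add: deg_le_def)

lemma deg_le_X: "deg_le fps_X 1"
  by (simp add: deg_le_def fps_X_def)

lemma deg_le_lin: "deg_le (1 - fps_const c * fps_X) 1"
  by (simp add: deg_le_def fps_X_def)

definition PiS :: "nat set \<Rightarrow> rat poly fract fps" where
  "PiS S = (\<Prod>i\<in>S. 1 - fps_const (qq ^ i) * fps_X)"

lemma deg_le_Pi: "finite S \<Longrightarrow> deg_le (PiS S) (card S)"
proof (induction S rule: finite_induct)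
  case empty thus ?case by (simp add: PiS_def deg_le_1)
next
  case (insert x F)
  have "PiS (insert x F) = (1 - fps_const (qq ^ x) * fps_X) * PiS F"
    using insert by (simp add: PiS_def)
  moreover have "deg_le \<dots> (1 + card F)" by (rule deg_le_mult[OF deg_le_lin insert.IH])
  ultimately show ?case using insert by simp
qed

lemma lin_mult_nth:
  fixes c :: "'b::comm_ring_1"
  shows   "((1 - fps_const c * fps_X) * f) $ j = f $ j - (if j = 0 then 0 else c * f $ (j - 1))"
proof -
  have "(1 - fps_const c * fps_X) * f = f - fps_const c * (fps_X * f)" by (simp add: left_diff_distrib mult.assoc)
  thus ?thesis by simp
qed

lemma Pi_remove: "finite S \<Longrightarrow> x \<in> S \<Longrightarrow>
   PiS S = (1 - fps_const (qq ^ x) * fps_X) * PiS (S - {x})"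
  by (simp add: PiS_def prod.remove)

lemma Pi_nth0: "finite S \<Longrightarrow> PiS S $ 0 = 1"
proof (induction S rule: finite_induct)
  case empty thus ?case by (simp add: PiS_def)
next
  case (insert x F)
  have "PiS (insert x F) = (1 - fps_const (qq ^ x) * fps_X) * PiS F"
    using insert by (simp add: PiS_def)
  thus ?case using insert lin_mult_nth by simp
qed

definition geo :: "'b::field \<Rightarrow> 'b fps" where "geo a = Abs_fps (\<lambda>n. a ^ n)"

lemma geo_mult: "(1 - fps_const a * fps_X) * geo a = 1"
  by (rule fps_ext) (auto simp: lin_mult_nth geo_def power_eq_if)



lemma height_mono:
  assumes fin: "finite P" and hgt: "is_height P h"
  shows "x \<in> P \<Longrightarrow> z \<in> P \<Longrightarrow> x < z \<Longrightarrow> h x < h z"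
proof (induction "card {w\<in>P. x<w \<and> w<z}" arbitrary: x z rule: less_induct)
  case less
  show ?case
  proof (cases "\<exists>w\<in>P. x<w \<and> w<z")
    case False thus ?thesis using hgt less.prems unfolding is_height_def by blast
  next
    case True then obtain w where w: "w\<in>P" "x<w" "w<z" by blast
    have "card {v\<in>P. x<v \<and> v<w} < card {v\<in>P. x<v \<and> v<z}"
      by (rule psubset_card_mono) (use fin w in \<open>auto dest: less_trans\<close>)
    hence 1: "h x < h w" using less.hyps less.prems w by blast
    have "card {v\<in>P. w<v \<and> v<z} < card {v\<in>P. x<v \<and> v<z}"
      by (rule psubset_card_mono) (use fin w in \<open>auto dest: less_trans\<close>)
    hence 2: "h w < h z" using less.hyps less.prems w by blast
    show ?thesis using 1 2 by simp
  qed
qed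

lemma mc_0 [simp]: "multichains A 0 = {[]}"
  by (auto simp: multichains_def)

lemma mc_Suc: "multichains A (Suc m) =
   (\<lambda>(y,ys). y # ys) ` (SIGMA y:A. multichains {z\<in>A. y \<le> z} m)"
proof (rule set_eqI)
  fix xs
  show "xs \<in> multichains A (Suc m) \<longleftrightarrow>
        xs \<in> (\<lambda>(y,ys). y # ys) ` (SIGMA y:A. multichains {z\<in>A. y \<le> z} m)"
  proof
    assume "xs \<in> multichains A (Suc m)"
    then obtain y ys where "xs = y # ys" "length ys = m" "y \<in> A" "set ys \<subseteq> A"
      "\<forall>z\<in>set ys. y \<le> z" "sorted_wrt (\<le>) ys"
      by (auto simp: multichains_def length_Suc_conv)
    thus "xs \<in> (\<lambda>(y,ys). y # ys) ` (SIGMA y:A. multichains {z\<in>A. y \<le> z} m)"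
      by (intro rev_image_eqI[of "(y,ys)"]) (auto simp: multichains_def)
  next
    assume "xs \<in> (\<lambda>(y,ys). y # ys) ` (SIGMA y:A. multichains {z\<in>A. y \<le> z} m)"
    thus "xs \<in> multichains A (Suc m)" by (auto simp: multichains_def)
  qed
qed

lemma finite_mc: "finite A \<Longrightarrow> finite (multichains A m)"
  by (rule finite_subset[OF _ finite_lists_length_eq[of A m]]) (auto simp: multichains_def)

definition Ug :: "('a::order \<Rightarrow> nat) \<Rightarrow> 'a set \<Rightarrow> nat \<Rightarrow> rat poly fract" where
  "Ug h A m = (\<Sum>xs\<in>multichains A m. qq ^ sum_list (map h xs))"

lemma Ug_0 [simp]: "Ug h A 0 = 1"
  by (simp add: Ug_def)

lemma Ug_Suc: "finite A \<Longrightarrow>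
   Ug h A (Suc m) = (\<Sum>y\<in>A. qq ^ h y * Ug h {z\<in>A. y \<le> z} m)"
proof -
  assume fin: "finite A"
  have inj: "inj_on (\<lambda>(y,ys). y # ys) (SIGMA y:A. multichains {z\<in>A. y \<le> z} m)"
    by (auto simp: inj_on_def)
  have "Ug h A (Suc m) = (\<Sum>p\<in>(SIGMA y:A. multichains {z\<in>A. y \<le> z} m).
            qq ^ sum_list (map h ((\<lambda>(y,ys). y # ys) p)))"
    unfolding Ug_def mc_Suc by (rule sum.reindex[OF inj, unfolded comp_def])
  also have "\<dots> = (\<Sum>(y,ys)\<in>(SIGMA y:A. multichains {z\<in>A. y \<le> z} m). qq ^ sum_list (map h (y # ys)))"
    by (rule sum.cong) auto
  also have "\<dots> = (\<Sum>y\<in>A. \<Sum>ys\<in>multichains {z\<in>A. y \<le> z} m. qq ^ sum_list (map h (y # ys)))"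
    by (rule sum.Sigma[symmetric]) (use fin in \<open>auto intro: finite_mc\<close>)
  also have "\<dots> = (\<Sum>y\<in>A. qq ^ h y * Ug h {z\<in>A. y \<le> z} m)"
    by (simp add: Ug_def power_add sum_distrib_left)
  finally show ?thesis .
qed

context
  fixes P :: "'a::order set" and h :: "'a \<Rightarrow> nat"
  assumes fin: "finite P" and hgt: "is_height P h"
begin

definition Ms :: "rat poly fract fps" where
  "Ms = Abs_fps (\<lambda>n. if n = 0 then 0 else Ug h P n)"

definition T :: "'a \<Rightarrow> rat poly fract fps" where
  "T x = Abs_fps (\<lambda>n. if n = 0 then 0 else qq ^ h x * Ug h {y\<in>P. x \<le> y} (n - 1))"

lemma Ug_up_Suc: "Ug h {y\<in>P. x \<le> y} (Suc m) = (\<Sum>y\<in>{y\<in>P. x \<le> y}. qq ^ h y * Ug h {z\<in>P. y \<le> z} m)"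
proof -
  have "Ug h {y\<in>P. x \<le> y} (Suc m) =
     (\<Sum>y\<in>{y\<in>P. x \<le> y}. qq ^ h y * Ug h {z\<in>{y\<in>P. x \<le> y}. y \<le> z} m)"
    by (rule Ug_Suc) (use fin in auto)
  also have "\<dots> = (\<Sum>y\<in>{y\<in>P. x \<le> y}. qq ^ h y * Ug h {z\<in>P. y \<le> z} m)"
    by (rule sum.cong) (auto intro!: arg_cong[where f="\<lambda>A. Ug h A m"] dest: order_trans)
  finally show ?thesis .
qed

lemma Ms_sum: "Ms = (\<Sum>x\<in>P. T x)"
proof (rule fps_ext)
  fix n show "Ms $ n = (\<Sum>x\<in>P. T x) $ n"
    by (cases n) (simp_all add: Ms_def T_def fps_sum_nth Ug_Suc fin)
qed

lemma T_eq: assumes x: "x \<in> P"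
  shows "(1 - fps_const (qq ^ h x) * fps_X) * T x =
     fps_const (qq ^ h x) * (fps_X * (1 + (\<Sum>y\<in>{y\<in>P. x < y}. T y)))"
proof (rule fps_ext)
  fix n
  have split: "{y\<in>P. x \<le> y} = insert x {y\<in>P. x < y}" using x by auto
  show "((1 - fps_const (qq ^ h x) * fps_X) * T x) $ n =
     (fps_const (qq ^ h x) * (fps_X * (1 + (\<Sum>y\<in>{y\<in>P. x < y}. T y)))) $ n"
  proof (cases n)
    case 0 thus ?thesis by (simp add: lin_mult_nth T_def)
  next
    case (Suc m)
    show ?thesis
    proof (cases m)
      case 0 thus ?thesis using Suc by (simp add: lin_mult_nth T_def fps_sum_nth)
    next
      case (Suc k)
      have "Ug h {y\<in>P. x \<le> y} (Suc k) = qq ^ h x * Ug h {z\<in>P. x \<le> z} k +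
          (\<Sum>y\<in>{y\<in>P. x < y}. qq ^ h y * Ug h {z\<in>P. y \<le> z} k)"
      proof -
        have gen: "(\<Sum>y\<in>{y\<in>P. x \<le> y}. g y) = g x + (\<Sum>y\<in>{y\<in>P. x<y}. g y)" for g :: "'a \<Rightarrow> rat poly fract"
          by (simp add: split fin)
        show ?thesis unfolding Ug_up_Suc by (rule gen)
      qed
      thus ?thesis using Suc \<open>n = Suc m\<close>
        by (simp add: lin_mult_nth T_def fps_sum_nth algebra_simps)
    qed
  qed
qed

lemma T_deg:
  "x \<in> P \<Longrightarrow> finite S \<Longrightarrow> h ` {y\<in>P. x \<le> y} \<subseteq> S \<Longrightarrow> deg_le (PiS S * T x) (card S)"
proof (induction "card {y\<in>P. x < y}" arbitrary: x S rule: less_induct)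
  case less
  define c where "c = qq ^ h x"
  define S' where "S' = S - {h x}"
  have hx: "h x \<in> S" using less.prems by auto
  have cS: "card S = Suc (card S')"
    using card_Suc_Diff1[OF less.prems(2) hx] unfolding S'_def by simp
  have "PiS S * T x = PiS S' * ((1 - fps_const c * fps_X) * T x)"
    unfolding S'_def c_def using Pi_remove[OF less.prems(2) hx] by (simp add: mult_ac)
  also have "\<dots> = (fps_const c * fps_X) * (PiS S' + (\<Sum>y\<in>{y\<in>P. x < y}. PiS S' * T y))"
    unfolding c_def T_eq[OF less.prems(1)] by (simp add: algebra_simps sum_distrib_left)
  finally have eq: "PiS S * T x = (fps_const c * fps_X) * (PiS S' + (\<Sum>y\<in>{y\<in>P. x < y}. PiS S' * T y))" .
  have "deg_le (PiS S' + (\<Sum>y\<in>{y\<in>P. x < y}. PiS S' * T y)) (card S')"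
  proof (rule deg_le_add)
    show "deg_le (PiS S') (card S')" using deg_le_Pi less.prems(2) S'_def by simp
    show "deg_le (\<Sum>y\<in>{y\<in>P. x < y}. PiS S' * T y) (card S')"
    proof (rule deg_le_sum)
      fix y assume y: "y \<in> {y\<in>P. x < y}"
      have "card {z\<in>P. y < z} < card {z\<in>P. x < z}"
        by (rule psubset_card_mono) (use fin y in \<open>auto dest: less_trans\<close>)
      moreover have "h ` {z\<in>P. y \<le> z} \<subseteq> S'"
      proof
        fix a assume "a \<in> h ` {z\<in>P. y \<le> z}"
        then obtain z where z: "z \<in> P" "y \<le> z" "a = h z" by auto
        have "x < z" using y z by (auto dest: less_le_trans)
        hence "h x < h z" using height_mono[OF fin hgt] less.prems(1) z by blast
        moreover have "h z \<in> S" using less.prems(3) z \<open>x < z\<close> by auto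
        ultimately show "a \<in> S'" using z unfolding S'_def by auto
      qed
      ultimately show "deg_le (PiS S' * T y) (card S')"
        using less.hyps[of y S'] y less.prems(2) S'_def by auto
    qed
  qed
  hence "deg_le ((fps_const c * fps_X) * (PiS S' + (\<Sum>y\<in>{y\<in>P. x < y}. PiS S' * T y))) (0 + 1 + card S')"
    by (intro deg_le_mult deg_le_const deg_le_X)
  thus ?case using eq cS by simp
qed

lemma Ms_deg: "deg_le (PiS {0..Max (h ` P)} * Ms) (Suc (Max (h ` P)))"
proof -
  have "PiS {0..Max (h ` P)} * Ms = (\<Sum>x\<in>P. PiS {0..Max (h ` P)} * T x)"
    by (simp add: Ms_sum sum_distrib_left)
  moreover have "deg_le (\<Sum>x\<in>P. PiS {0..Max (h ` P)} * T x) (card {0..Max (h ` P)})"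
  proof (rule deg_le_sum)
    fix x assume "x \<in> P"
    thus "deg_le (PiS {0..Max (h ` P)} * T x) (card {0..Max (h ` P)})"
      by (intro T_deg) (auto intro!: Max_ge fin)
  qed
  ultimately show ?thesis by simp
qed

end


lemma interp:
  fixes x y :: "nat \<Rightarrow> 'b::field"
  shows "inj_on x {..n} \<Longrightarrow> \<exists>p. degree p \<le> n \<and> (\<forall>i\<le>n. poly p (x i) = y i)"
proof (induction n)
  case 0 show ?case by (intro exI[of _ "[:y 0:]"]) auto
next
  case (Suc n)
  then obtain p where p: "degree p \<le> n" "\<forall>i\<le>n. poly p (x i) = y i"
    using Suc.IH inj_on_subset[OF Suc.prems, of "{..n}"] by auto
  define w where "w = (\<Prod>i\<le>n. [:- x i, 1:])"
  have wdeg: "degree w \<le> Suc n"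
  proof -
    have "degree w \<le> sum (degree \<circ> (\<lambda>i. [:- x i, 1:])) {..n}"
      unfolding w_def by (rule degree_prod_sum_le) simp
    thus ?thesis by simp
  qed
  have w0: "poly w (x i) = 0" if "i \<le> n" for i
    unfolding w_def poly_prod using that by (auto intro!: prod_zero)
  have ne: "x (Suc n) \<noteq> x i" if "i \<le> n" for i
    using Suc.prems that unfolding inj_on_def by (metis atMost_iff le_Suc_eq Suc_n_not_le_n)
  have w1: "poly w (x (Suc n)) \<noteq> 0"
    unfolding w_def poly_prod using ne by auto
  define c where "c = (y (Suc n) - poly p (x (Suc n))) / poly w (x (Suc n))"
  show ?case
  proof (intro exI[of _ "p + smult c w"] conjI allI impI)
    show "degree (p + smult c w) \<le> Suc n"
      using p wdeg degree_smult_le[of c w] by (intro degree_add_le) auto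
  next
    fix i assume "i \<le> Suc n"
    thus "poly (p + smult c w) (x i) = y i"
      using w0 w1 p by (cases "i = Suc n") (auto simp: c_def)
  qed
qed

definition ev :: "int poly \<Rightarrow> rat poly fract" where
  "ev r = poly (map_poly of_int r) qq"

lemma map_poly_of_int_add: "map_poly (of_int :: int \<Rightarrow> 'b::comm_ring_1) (p + q) = map_poly of_int p + map_poly of_int q"
  by (rule poly_eqI) (simp add: coeff_map_poly)

lemma map_poly_of_int_minus: "map_poly (of_int :: int \<Rightarrow> 'b::comm_ring_1) (- p) = - map_poly of_int p"
  by (rule poly_eqI) (simp add: coeff_map_poly)

lemma map_poly_of_int_mult: "map_poly (of_int :: int \<Rightarrow> 'b::comm_ring_1) (p * q) = map_poly of_int p * map_poly of_int q"
  by (rule poly_eqI) (simp add: coeff_map_poly coeff_mult)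

lemma ev_add: "ev (p + q) = ev p + ev q" by (simp add: ev_def map_poly_of_int_add)
lemma ev_mult: "ev (p * q) = ev p * ev q" by (simp add: ev_def map_poly_of_int_mult)
lemma ev_minus: "ev (- p) = - ev p" by (simp add: ev_def map_poly_of_int_minus)

lemma L0_add: "a \<in> range ev \<Longrightarrow> b \<in> range ev \<Longrightarrow> a + b \<in> range ev"
  by (auto simp: ev_add[symmetric])

lemma L0_mult: "a \<in> range ev \<Longrightarrow> b \<in> range ev \<Longrightarrow> a * b \<in> range ev"
  by (auto simp: ev_mult[symmetric])

lemma L0_uminus: "a \<in> range ev \<Longrightarrow> - a \<in> range ev"
  by (auto simp: ev_minus[symmetric])

lemma L0_diff: "a \<in> range ev \<Longrightarrow> b \<in> range ev \<Longrightarrow> a - b \<in> range ev"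
  using L0_add[OF _ L0_uminus] by (metis diff_conv_add_uminus)

lemma L0_of_int: "of_int k \<in> range ev"
  by (rule image_eqI[of _ _ "[:k:]"]) (auto simp: ev_def map_poly_pCons)

lemma L0_0: "0 \<in> range ev" using L0_of_int[of 0] by simp
lemma L0_1: "1 \<in> range ev" using L0_of_int[of 1] by simp

lemma L0_qq: "qq \<in> range ev"
  by (rule image_eqI[of _ _ "[:0, 1:]"]) (auto simp: ev_def map_poly_pCons)

lemma L0_power: "a \<in> range ev \<Longrightarrow> a ^ n \<in> range ev"
  by (induction n) (auto intro: L0_mult L0_1)

lemma L0_sum: "(\<And>x. x \<in> S \<Longrightarrow> f x \<in> range ev) \<Longrightarrow> sum f S \<in> range ev"
  by (induction S rule: infinite_finite_induct) (auto intro: L0_add L0_0)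

lemma L0_fps_mult: "(\<And>i. f $ i \<in> range ev) \<Longrightarrow> (\<And>i. g $ i \<in> range ev) \<Longrightarrow> (f * g) $ k \<in> range ev"
  unfolding fps_mult_nth by (intro L0_sum L0_mult) auto

lemma L0_PiS: "finite S \<Longrightarrow> PiS S $ j \<in> range ev"
proof (induction S arbitrary: j rule: finite_induct)
  case empty thus ?case by (cases j) (auto simp: PiS_def L0_0 L0_1)
next
  case (insert x F)
  have "PiS (insert x F) = (1 - fps_const (qq ^ x) * fps_X) * PiS F"
    using insert by (simp add: PiS_def)
  thus ?case using insert.IH by (auto simp: lin_mult_nth intro!: L0_diff L0_mult L0_power L0_qq L0_0)
qed

lemma PiS_top: "finite S \<Longrightarrow> PiS S $ card S = (-1) ^ card S * qq ^ (\<Sum>S)"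
proof (induction S rule: finite_induct)
  case empty thus ?case by (simp add: PiS_def)
next
  case (insert x F)
  have "PiS (insert x F) = (1 - fps_const (qq ^ x) * fps_X) * PiS F"
    using insert by (simp add: PiS_def)
  moreover have "PiS F $ Suc (card F) = 0" using deg_le_Pi[OF insert.hyps(1)] by (simp add: deg_le_def)
  ultimately show ?case using insert by (simp add: lin_mult_nth power_add)
qed

lemma poly_sum_le: fixes p :: "'b::comm_ring_1 poly" assumes "degree p \<le> n" shows "poly p x = (\<Sum>i\<le>n. coeff p i * x ^ i)"
proof -
  have "poly p x = (\<Sum>i\<le>degree p. coeff p i * x^i)" by (rule poly_altdef)
  also have "\<dots> = (\<Sum>i\<le>n. coeff p i * x^i)"
    by (rule sum.mono_neutral_left) (use assms in \<open>auto simp: coeff_eq_0\<close>)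
  finally show ?thesis .
qed

lemma laurent_conv:
  assumes "w \<in> range ev"
  shows "\<exists>c::int \<Rightarrow> int. finite {j. c j \<noteq> 0} \<and>
     w / qq ^ N = (\<Sum>j\<in>{j. c j \<noteq> 0}. of_int (c j) * qq powi j)"
proof -
  obtain r where r: "w = ev r" using assms by auto
  define c where "c j = (if - int N \<le> j then coeff r (nat (j + int N)) else 0)" for j
  define g where "g i = int i - int N" for i
  have sub: "{j. c j \<noteq> 0} \<subseteq> g ` {..degree r}"
  proof
    fix j assume "j \<in> {j. c j \<noteq> 0}"
    hence j: "- int N \<le> j" "coeff r (nat (j + int N)) \<noteq> 0" by (auto simp: c_def split: if_splits)
    hence "nat (j + int N) \<le> degree r" by (intro le_degree)
    moreover have "j = g (nat (j + int N))" using j by (simp add: g_def)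
    ultimately show "j \<in> g ` {..degree r}" by blast
  qed
  have fin: "finite {j. c j \<noteq> 0}" by (rule finite_subset[OF sub]) simp
  have "w = (\<Sum>i\<le>degree r. of_int (coeff r i) * qq ^ i)"
    unfolding r ev_def using map_poly_degree_leq
    by (subst poly_sum_le[of _ "degree r"]) (auto simp: coeff_map_poly)
  hence "w / qq ^ N = (\<Sum>i\<le>degree r. of_int (coeff r i) * qq powi (g i))"
    by (simp add: sum_divide_distrib g_def power_int_diff)
  also have "\<dots> = (\<Sum>j\<in>g ` {..degree r}. of_int (c j) * qq powi j)"
    by (subst sum.reindex) (auto simp: inj_on_def g_def c_def)
  also have "\<dots> = (\<Sum>j\<in>{j. c j \<noteq> 0}. of_int (c j) * qq powi j)"
    by (rule sum.mono_neutral_right) (use sub in auto)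
  finally show ?thesis using fin by blast
qed



theorem mainTheorem4:
  fixes P :: "'a::order set" and h :: "'a \<Rightarrow> nat"
  assumes "finite P" and "is_height P h"
  defines "H \<equiv> Max (h ` P)"
  shows "\<exists>c :: nat \<Rightarrow> int \<Rightarrow> int.
           finite {(k, j). c k j \<noteq> 0} \<and>
           (\<forall>k j. H < k \<longrightarrow> c k j = 0) \<and>
           qZeta_series P h * (\<Prod>i\<in>{0..H}. 1 - fps_const (qq ^ i) * fps_X)
             = laurent_series c"
proof -
  note fin = assms(1) and hgt = assms(2)
  have "inj_on (\<lambda>i. qint (i + 2)) {..H}" by (auto simp: inj_on_def dest: qint_inj)
  then obtain p where p_deg: "degree p \<le> H"
    and p_int: "\<forall>i\<le>H. poly p (qint (i + 2)) = Ug h P (i + 1)"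
    using interp[of "\<lambda>i. qint (i + 2)" H "\<lambda>i. Ug h P (i + 1)"] by blast
  define A where "A = Abs_fps (\<lambda>n. poly p (qint (n + 1)))"
  define a0 where "a0 = poly p 1"
  define B where "B = fps_const a0 + Ms P h"
  define PP where "PP = PiS {0..H}"
  have Pi_eq: "(\<Prod>i\<in>{0..H}. 1 - fps_const (qq ^ i) * fps_X) = PP" by (simp add: PP_def PiS_def)
  define r where "r = pcompose p [:- 1 / (qq - 1), qq / (qq - 1):]"
  have r_deg: "degree r \<le> H"
    using degree_pcompose_le[of p "[:- 1 / (qq - 1), qq / (qq - 1):]"] p_deg
    unfolding r_def by (simp add: order_trans)
  have A_sum: "A = (\<Sum>j\<le>H. fps_const (coeff r j) * geo (qq ^ j))"
  proof (rule fps_ext)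
    fix n
    have "A $ n = poly r (qq ^ n)"
      unfolding A_def r_def by (simp add: poly_pcompose qint_Suc_alt algebra_simps)
    also have "\<dots> = (\<Sum>j\<le>H. coeff r j * (qq ^ n) ^ j)" by (rule poly_sum_le[OF r_deg])
    also have "\<dots> = (\<Sum>j\<le>H. fps_const (coeff r j) * geo (qq ^ j)) $ n"
      by (simp add: fps_sum_nth geo_def power_mult[symmetric] mult.commute)
    finally show "A $ n = (\<Sum>j\<le>H. fps_const (coeff r j) * geo (qq ^ j)) $ n" .
  qed
  have A_deg: "deg_le (PP * A) H"
  proof -
    have "PP * A = (\<Sum>j\<le>H. fps_const (coeff r j) * (PP * geo (qq ^ j)))"
      by (simp add: A_sum sum_distrib_left mult_ac)
    moreover have "deg_le (PP * geo (qq ^ j)) H" if "j \<le> H" for j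
    proof -
      have "PP * geo (qq ^ j) = PiS ({0..H} - {j}) * ((1 - fps_const (qq ^ j) * fps_X) * geo (qq ^ j))"
        unfolding PP_def using Pi_remove[of "{0..H}" j] that by (simp add: mult_ac)
      also have "\<dots> = PiS ({0..H} - {j})" by (simp add: geo_mult)
      finally show ?thesis using deg_le_Pi[of "{0..H} - {j}"] that
        by (auto elim: deg_le_mono)
    qed
    ultimately show ?thesis
      by (auto intro!: deg_le_sum deg_le_mult[OF deg_le_const, simplified])
  qed
  have B_deg: "deg_le (PP * B) (Suc H)"
  proof -
    have "PP * B = fps_const a0 * PP + PP * Ms P h" by (simp add: B_def algebra_simps)
    moreover have "deg_le (fps_const a0 * PP) (Suc H)"
      using deg_le_mult[OF deg_le_const deg_le_Pi[of "{0..H}"]] by (simp add: PP_def)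
    moreover have "deg_le (PP * Ms P h) (Suc H)"
      using Ms_deg[OF fin hgt] by (simp add: PP_def H_def)
    ultimately show ?thesis by (simp add: deg_le_add)
  qed
  have D0: "(A - B) $ n = 0" if "n \<le> Suc H" for n
  proof (cases n)
    case 0 thus ?thesis using qint_1 by (simp add: A_def B_def a0_def Ms_def fin hgt)
  next
    case (Suc i)
    hence "i \<le> H" using that by simp
    thus ?thesis using p_int Suc by (simp add: A_def B_def Ms_def fin hgt)
  qed
  have "PP * (A - B) = 0"
  proof (rule fps_ext)
    fix n
    show "(PP * (A - B)) $ n = 0 $ n"
    proof (cases "n \<le> Suc H")
      case True
      have D0': "A $ m = B $ m" if "m \<le> Suc H" for m using D0[OF that] by simp
      show ?thesis unfolding fps_mult_nth using True by (auto intro!: sum.neutral simp: D0')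
    next
      case False
      have "deg_le (PP * A - PP * B) (Suc H)"
        by (intro deg_le_diff deg_le_mono[OF A_deg] B_deg) simp
      thus ?thesis using False by (simp add: deg_le_def algebra_simps)
    qed
  qed
  moreover have "PP \<noteq> 0" using Pi_nth0[of "{0..H}"] by (auto simp: PP_def)
  ultimately have AB: "A = B" by simp
  have AB': "poly p (qint n) = Ug h P (n - 1)" if "n \<ge> 2" for n
  proof -
    have "A $ (n - 1) = B $ (n - 1)" using AB by simp
    thus ?thesis using that by (simp add: A_def B_def Ms_def fin hgt)
  qed
  have Z: "qZeta P h = p"
    unfolding qZeta_def
  proof (rule the_equality)
    show "\<forall>n\<ge>2. poly p (qint n) = (\<Sum>xs\<in>multichains P (n - 1). qq ^ sum_list (map h xs))"
      using AB' by (simp add: Ug_def)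
  next
    fix p' assume p': "\<forall>n\<ge>2. poly p' (qint n) = (\<Sum>xs\<in>multichains P (n - 1). qq ^ sum_list (map h xs))"
    show "p' = p"
    proof (rule ccontr)
      assume "p' \<noteq> p"
      hence "finite {x. poly (p' - p) x = 0}" by (intro poly_roots_finite) simp
      moreover have "qint ` {2..} \<subseteq> {x. poly (p' - p) x = 0}"
        using p' AB' by (auto simp: Ug_def)
      moreover have "infinite (qint ` {2..})"
      proof
        assume "finite (qint ` {2..})"
        moreover have "inj_on qint {2..}" by (auto simp: inj_on_def dest: qint_inj)
        ultimately have "finite {2::nat..}" by (rule finite_imageD)
        thus False using infinite_Ici by blast
      qed
      ultimately show False using finite_subset by blast
    qed
  qed
  have ser: "qZeta_series P h = A" by (simp add: qZeta_series_def Z A_def)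
  define F where "F = PP * B"
  have F_deg: "deg_le F H" using A_deg AB by (simp add: F_def)
  define N where "N = \<Sum>{0..H}"
  define z where "z k = (PP * Ms P h) $ k" for k
  have Pi_L0: "PP $ k \<in> range ev" for k by (simp add: PP_def L0_PiS)
  have Ms_L0: "Ms P h $ k \<in> range ev" for k
    by (cases k) (auto simp: Ms_def fin hgt Ug_def intro!: L0_0 L0_sum L0_power L0_qq)
  have z_L0: "z k \<in> range ev" for k unfolding z_def by (intro L0_fps_mult Pi_L0 Ms_L0)
  have F_nth: "F $ k = a0 * PP $ k + z k" for k
    by (simp add: F_def B_def z_def algebra_simps)
  define sg where "sg = (-1::rat poly fract) ^ Suc H"
  have ss: "sg * sg = 1" unfolding sg_def by (simp add: power_mult_distrib[symmetric])
  have sg_L0: "sg \<in> range ev" unfolding sg_def by (intro L0_power L0_of_int[of "-1", simplified])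
  have top: "PP $ Suc H = sg * qq ^ N"
    using PiS_top[of "{0..H}"] by (simp add: PP_def N_def sg_def)
  have "F $ Suc H = 0" using F_deg by (simp add: deg_le_def)
  hence eq: "a0 * (sg * qq ^ N) + z (Suc H) = 0" using F_nth top by simp
  have "sg * (a0 * (sg * qq ^ N) + z (Suc H)) = 0" using eq by simp
  hence "a0 * qq ^ N * (sg * sg) + sg * z (Suc H) = 0" by (simp add: algebra_simps)
  hence "a0 * qq ^ N = - (sg * z (Suc H))" using ss by (simp add: eq_neg_iff_add_eq_0)
  hence a0: "a0 = - (sg * z (Suc H)) / qq ^ N"
    by (metis qq_nz power_not_zero nonzero_mult_div_cancel_right)
  have Fk: "\<exists>w\<in>range ev. F $ k = w / qq ^ N" for k
  proof (intro bexI)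
    show "F $ k = (- (sg * z (Suc H)) * PP $ k + z k * qq ^ N) / qq ^ N"
      unfolding F_nth a0 by (simp add: field_simps)
    show "- (sg * z (Suc H)) * PP $ k + z k * qq ^ N \<in> range ev"
      by (intro L0_add L0_mult L0_uminus L0_power sg_L0 z_L0 Pi_L0 L0_qq)
  qed
  have "\<forall>k. \<exists>ck::int\<Rightarrow>int. finite {j. ck j \<noteq> 0} \<and>
     F $ k = (\<Sum>j\<in>{j. ck j \<noteq> 0}. of_int (ck j) * qq powi j)"
    using Fk laurent_conv by metis
  then obtain C where C: "\<And>k. finite {j. C k j \<noteq> 0}"
    "\<And>k. F $ k = (\<Sum>j\<in>{j. C k j \<noteq> 0}. of_int (C k j) * qq powi j)"
    by metis
  define c where "c k j = (if k \<le> H then C k j else 0)" for k j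
  show ?thesis
  proof (intro exI[of _ c] conjI allI impI)
    have "{(k, j). c k j \<noteq> 0} \<subseteq> (SIGMA k:{..H}. {j. C k j \<noteq> 0})"
      by (auto simp: c_def split: if_splits)
    thus "finite {(k, j). c k j \<noteq> 0}"
      by (rule finite_subset) (auto intro: C(1))
  next
    fix k j assume "H < k" thus "c k j = 0" by (simp add: c_def)
  next
    show "qZeta_series P h * (\<Prod>i\<in>{0..H}. 1 - fps_const (qq ^ i) * fps_X) = laurent_series c"
    proof (rule fps_ext)
      fix k
      have "qZeta_series P h * (\<Prod>i\<in>{0..H}. 1 - fps_const (qq ^ i) * fps_X) = F"
        unfolding ser Pi_eq F_def AB by (simp add: mult.commute)
      moreover have "F $ k = laurent_series c $ k"
      proof (cases "k \<le> H")
        case True thus ?thesis by (simp add: laurent_series_def c_def C(2))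
      next
        case False thus ?thesis using F_deg by (simp add: laurent_series_def c_def deg_le_def)
      qed
      ultimately show "(qZeta_series P h * (\<Prod>i\<in>{0..H}. 1 - fps_const (qq ^ i) * fps_X)) $ k =
          laurent_series c $ k" by simp
    qed
  qed
qed

end
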